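(* For every integer $c\ge1$ there exists $\epsilon(c)>0$ with the following property. Let $\{U_\alpha\}_{\alpha\in\mathcal A}$ be a family of open subsets of $\mathbb R^c$ covering $[0,1]^c$ with $\mathrm{diam}(U_\alpha)<\epsilon(c)$ for all $\alpha$, and let $f:[0,1]^c\to\mathbb R^c$ be continuous. Suppose that for every $x\in[0,1]^c$ there is a subset $\mathcal I\subset\mathcal A$ such that $x\in U_\alpha$ for all $\alpha\in\mathcal I$ and $\bigcap_{\alpha\in\mathcal I}f(\partial U_\alpha\cap[0,1]^c)=\emptyset$. Then $f$ has a stable value.
   Context: For a continuous map $f:X\to Z$ between metric spaces, $z\in Z$ is a stable value if there is $\epsilon>0$ such that $z\in g(X)$ for every continuous $g:X\to Z$ with $\sup_x d(f(x),g(x))<\epsilon$. *)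

theory Defs
  imports "HOL-Analysis.Analysis"
begin

definition stable_value :: "'a::metric_space set \<Rightarrow> ('a \<Rightarrow> 'b::metric_space) \<Rightarrow> 'b \<Rightarrow> bool" where
  "stable_value X f z \<longleftrightarrow>
     (\<exists>e>0. \<forall>g. continuous_on X g \<and> bdd_above ((\<lambda>x. dist (f x) (g x)) ` X)
                  \<and> (SUP x\<in>X. dist (f x) (g x)) < e \<longrightarrow> z \<in> g ` X)"

end

theory Submission
  imports Defs
begin


lemma One_nth_cart [simp]: "(One::real^'n) $ i = 1"
proof -
  have "(One::real^'n) \<bullet> axis i 1 = 1"
    by (rule inner_sum_Basis) (auto simp: Basis_vec_def)
  then show ?thesis by (simp add: inner_axis)
qed
lemma mem_cube_cart: "(x::real^'n) \<in> cbox (a *\<^sub>R One) (b *\<^sub>R One) \<longleftrightarrow> (\<forall>i. a \<le> x$i \<and> x$i \<le> b)"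
  by (simp only: mem_box_cart vector_scaleR_component One_nth_cart real_scaleR_def mult_1_right)
lemma mem_cube01_cart: "(x::real^'n) \<in> cbox 0 One \<longleftrightarrow> (\<forall>i. 0 \<le> x$i \<and> x$i \<le> 1)"
  by (simp only: mem_box_cart zero_index One_nth_cart)

lemma brouwer_step:
  fixes h :: "real^'n \<Rightarrow> real^'n"
  assumes h: "continuous_on (cbox 0 One) h"
    and close: "\<And>x. x \<in> cbox 0 One \<Longrightarrow> norm (h x - x) \<le> 1/4"
  shows "cbox ((1/4) *\<^sub>R One) ((3/4) *\<^sub>R One) \<subseteq> h ` cbox 0 One"
proof
  fix p :: "real^'n" assume p: "p \<in> cbox ((1/4) *\<^sub>R One) ((3/4) *\<^sub>R One)"
  have "\<exists>y\<in>cbox 0 One. h y = p"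
  proof (rule brouwer_surjective[where S="{p}"])
    show "compact (cbox 0 (One::real^'n))" "convex (cbox 0 (One::real^'n))" "cbox 0 (One::real^'n) \<noteq> {}"
      by (auto simp: box_ne_empty)
    show "continuous_on (cbox 0 One) h" by (fact h)
    show "p \<in> {p}" by simp
    fix x y assume "x \<in> {p}" "y \<in> cbox 0 (One::real^'n)"
    then have x: "x = p" and y: "\<And>i. 0 \<le> y$i \<and> y$i \<le> 1" by (auto simp: mem_cube01_cart)
    have pi: "\<And>i. 1/4 \<le> p$i \<and> p$i \<le> 3/4" using p by (simp only: mem_cube_cart)
    have ci: "\<bar>(y - h y)$i\<bar> \<le> 1/4" for i
      using component_le_norm_cart[of "y - h y" i] close[OF \<open>y \<in> _\<close>] by (simp add: norm_minus_commute)
    show "x + (y - h y) \<in> cbox 0 One"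
      unfolding mem_cube01_cart x
    proof
      fix i
      have "\<bar>y$i - h y $i\<bar> \<le> 1/4" using ci[of i] by simp
      then have a: "y$i - h y $i \<le> 1/4" "h y $i - y$i \<le> 1/4" by linarith+
      have "(p + (y - h y)) $ i = p$i + (y$i - h y $i)" by simp
      then show "0 \<le> (p + (y - h y)) $ i \<and> (p + (y - h y)) $ i \<le> 1"
        using pi[of i] a by linarith
    qed
  qed
  then show "p \<in> h ` cbox 0 One" by force
qed

lemma nonneg_cube:
  "\<not> negligible (cbox ((1/4) *\<^sub>R One) ((3/4) *\<^sub>R (One::real^'n)))"
proof -
  have "(1/2) *\<^sub>R (One::real^'n) \<in> box ((1/4) *\<^sub>R One) ((3/4) *\<^sub>R (One::real^'n))"
    by (simp only: mem_box_cart vector_scaleR_component One_nth_cart real_scaleR_def) simp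
  then show ?thesis by (auto simp: negligible_interval)
qed



lemma glue:
  fixes f :: "'a::metric_space \<Rightarrow> 'b::real_normed_vector"
  assumes Z: "finite Z" and sep: "\<And>z z'. z\<in>Z \<Longrightarrow> z'\<in>Z \<Longrightarrow> z\<noteq>z' \<Longrightarrow> s \<le> dist z z'"
    and eta: "0 < \<eta>" "\<eta> \<le> s/8" and f: "continuous_on K f"
    and g: "\<And>z. z\<in>Z \<Longrightarrow> \<exists>g. continuous_on K g \<and> (\<forall>x\<in>K. dist (f x) (g x) < \<eta>) \<and> (\<forall>x\<in>K. g x \<noteq> z)"
  obtains F where "continuous_on K F" "\<And>x. x\<in>K \<Longrightarrow> dist (F x) (f x) < \<eta>"
     "\<And>x z. x\<in>K \<Longrightarrow> z\<in>Z \<Longrightarrow> F x \<noteq> z"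
proof -
  obtain G where G: "\<And>z. z\<in>Z \<Longrightarrow> continuous_on K (G z) \<and> (\<forall>x\<in>K. dist (f x) (G z x) < \<eta>) \<and> (\<forall>x\<in>K. G z x \<noteq> z)"
    using g by metis
  have s: "s > 0" using eta by linarith
  define \<phi> where "\<phi> t = max 0 (min 1 (2 - 8*t/s))" for t :: real
  have \<phi>01: "0 \<le> \<phi> t" "\<phi> t \<le> 1" for t by (auto simp: \<phi>_def)
  have \<phi>0: "\<phi> t = 0" if "s/4 \<le> t" for t
    using that s by (auto simp: \<phi>_def field_simps)
  have \<phi>1: "\<phi> t = 1" if "t \<le> s/8" for t
    using that s by (auto simp: \<phi>_def field_simps)
  define F where "F x = f x + (\<Sum>z\<in>Z. \<phi> (dist (f x) z) *\<^sub>R (G z x - f x))" for x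
  have contF: "continuous_on K F"
    unfolding F_def \<phi>_def
    by (intro continuous_intros f continuous_on_max continuous_on_min) (use G s in auto)
  have main: "dist (F x) (f x) < \<eta> \<and> (\<forall>z\<in>Z. F x \<noteq> z)" if x: "x \<in> K" for x
  proof (cases "\<exists>z0\<in>Z. dist (f x) z0 < s/4")
    case True
    then obtain z0 where z0: "z0 \<in> Z" "dist (f x) z0 < s/4" by blast
    have other: "\<phi> (dist (f x) z) = 0" if "z \<in> Z" "z \<noteq> z0" for z
    proof -
      have "s \<le> dist z0 z" using sep[OF z0(1) that(1)] that(2) by auto
      also have "\<dots> \<le> dist (f x) z0 + dist (f x) z" by (rule dist_triangle3)
      finally have "s/4 \<le> dist (f x) z" using z0 s by linarith
      then show ?thesis by (rule \<phi>0)
    qed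
    have sum: "(\<Sum>z\<in>Z. \<phi> (dist (f x) z) *\<^sub>R (G z x - f x)) = \<phi> (dist (f x) z0) *\<^sub>R (G z0 x - f x)"
      using Z z0(1) other by (simp add: sum.remove[OF Z z0(1)] sum.neutral)
    have Fx: "F x = f x + \<phi> (dist (f x) z0) *\<^sub>R (G z0 x - f x)" by (simp add: F_def sum)
    have Gd: "dist (f x) (G z0 x) < \<eta>" using G[OF z0(1)] x by blast
    have d: "dist (F x) (f x) < \<eta>"
    proof -
      have "dist (F x) (f x) = \<phi> (dist (f x) z0) * norm (G z0 x - f x)"
        using \<phi>01 by (simp add: Fx dist_norm)
      also have "\<dots> \<le> norm (G z0 x - f x)"
        using \<phi>01 by (simp add: mult_left_le_one_le)
      also have "\<dots> < \<eta>" using Gd by (simp add: dist_norm norm_minus_commute)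
      finally show ?thesis .
    qed
    show ?thesis
    proof (intro conjI d ballI)
      fix z assume z: "z \<in> Z"
      show "F x \<noteq> z"
      proof (cases "dist (f x) z \<le> s/8")
        case True
        then have "z = z0" using other[OF z] \<phi>1 by force
        then show ?thesis using True \<phi>1 G[OF z] x by (auto simp: Fx)
      next
        case False
        have "dist (f x) z \<le> dist (F x) z + dist (F x) (f x)" by (metis dist_commute dist_triangle add.commute)
        then show ?thesis using False d eta by auto
      qed
    qed
  next
    case False
    then have "F x = f x" by (simp add: F_def \<phi>0 not_less)
    then show ?thesis using False eta s by auto
  qed
  show ?thesis using that contF main by blast
qed



lemma infnorm_attained_cart: "\<exists>i. \<bar>(x::real^'n)$i\<bar> = infnorm x"
proof -
  have S: "{\<bar>x$i\<bar> |i. i\<in>UNIV} = range (\<lambda>i. \<bar>x$i\<bar>)" by auto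
  have "Sup (range (\<lambda>i. \<bar>x$i\<bar>)) \<in> range (\<lambda>i. \<bar>x$i\<bar>)"
    by (simp add: cSup_eq_Max)
  then show ?thesis unfolding infnorm_cart S by (metis imageE)
qed

lemma infnorm_le_cart: "(\<And>i. \<bar>(x::real^'n)$i\<bar> \<le> b) \<Longrightarrow> infnorm x \<le> b"
  unfolding infnorm_cart by (rule cSup_least) auto

definition zc :: "real \<Rightarrow> ('n \<Rightarrow> int) \<Rightarrow> real^'n" where
  "zc s m = (\<chi> i. s * (of_int (m i) + 1/2))"
definition idx :: "real \<Rightarrow> real^'n \<Rightarrow> ('n \<Rightarrow> int)" where
  "idx s y = (\<lambda>i. \<lfloor>y$i / s\<rfloor>)"
definition rp0 :: "real \<Rightarrow> real^'n \<Rightarrow> real^'n \<Rightarrow> real^'n" where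
  "rp0 s z y = z + (s / (2 * infnorm (y - z))) *\<^sub>R (y - z)"
definition rp :: "real \<Rightarrow> real^'n \<Rightarrow> real^'n" where
  "rp s y = rp0 s (zc s (idx s y)) y"
definition cube :: "real \<Rightarrow> ('n \<Rightarrow> int) \<Rightarrow> (real^'n) set" where
  "cube s m = {y. \<forall>i. s * of_int (m i) \<le> y$i \<and> y$i \<le> s * (of_int (m i) + 1)}"

lemma in_cube_idx: "s > 0 \<Longrightarrow> y \<in> cube s (idx s y)"
proof -
  assume s: "s > 0"
  have "s * of_int \<lfloor>y$i/s\<rfloor> \<le> y$i \<and> y$i \<le> s * (of_int \<lfloor>y$i/s\<rfloor> + 1)" for i
  proof -
    have "of_int \<lfloor>y$i/s\<rfloor> \<le> y$i/s" "y$i/s \<le> of_int \<lfloor>y$i/s\<rfloor> + 1" by linarith+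
    then have "s * of_int \<lfloor>y$i/s\<rfloor> \<le> s * (y$i/s)" "s * (y$i/s) \<le> s * (of_int \<lfloor>y$i/s\<rfloor> + 1)"
      using s by (intro mult_left_mono; simp)+
    then show ?thesis using s by simp
  qed
  then show ?thesis by (simp add: cube_def idx_def)
qed

lemma cube_comp: "y \<in> cube s m \<Longrightarrow> \<bar>(y - zc s m)$i\<bar> \<le> s/2"
proof -
  assume "y \<in> cube s m"
  then have a: "s * of_int (m i) \<le> y$i" "y$i \<le> s * of_int (m i) + s" by (auto simp: cube_def algebra_simps)
  have "(y - zc s m)$i = y$i - s * of_int (m i) - s/2" by (simp add: zc_def algebra_simps)
  then show ?thesis unfolding abs_le_iff using a by (intro conjI; linarith)
qed

lemma cube_infnorm: "y \<in> cube s m \<Longrightarrow> infnorm (y - zc s m) \<le> s/2"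
  by (rule infnorm_le_cart) (rule cube_comp)

lemma closed_cube: "closed (cube s m)"
  unfolding cube_def
  by (intro closed_Collect_all closed_Collect_conj closed_Collect_le continuous_intros)

lemma rp0_boundary:
  assumes "y \<in> cube s m" "s > 0" "y$i = s * of_int (m i) \<or> y$i = s * (of_int (m i) + 1)"
  shows "rp0 s (zc s m) y = y"
proof -
  have "\<bar>(y - zc s m)$i\<bar> = s/2" using assms(3) assms(2) by (auto simp: zc_def algebra_simps)
  then have "s/2 \<le> infnorm (y - zc s m)" by (metis component_le_infnorm_cart)
  then have "infnorm (y - zc s m) = s/2" using cube_infnorm[OF assms(1)] by linarith
  then have "s / (2 * infnorm (y - zc s m)) = 1" using assms(2) by simp
  then show ?thesis by (simp add: rp0_def)
qed

lemma rp_eq_rp0: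
  assumes y: "y \<in> cube s m" and s: "s > 0"
  shows "rp s y = rp0 s (zc s m) y"
proof (cases "idx s y = m")
  case True then show ?thesis by (simp add: rp_def)
next
  case False
  then obtain i where i: "\<lfloor>y$i / s\<rfloor> \<noteq> m i" by (auto simp: idx_def)
  have b: "s * of_int (m i) \<le> y$i" "y$i \<le> s * (of_int (m i) + 1)" using y by (auto simp: cube_def)
  then have b': "of_int (m i) \<le> y$i / s" "y$i / s \<le> of_int (m i) + 1" using s by (auto simp: field_simps)
  have eq: "y$i / s = of_int (m i) + 1"
  proof (rule ccontr)
    assume "y$i / s \<noteq> of_int (m i) + 1"
    then have "y$i / s < of_int (m i) + 1" using b' by linarith
    then have "\<lfloor>y$i / s\<rfloor> = m i" using b' by linarith
    then show False using i by simp
  qed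
  then have yi: "y$i = s * (of_int (m i) + 1)" using s by (simp add: field_simps)
  have fl: "idx s y i = m i + 1" using eq by (simp add: idx_def)
  have "rp s y = y"
    unfolding rp_def
    by (rule rp0_boundary[OF in_cube_idx[OF s] s, of _ i]) (use yi fl in simp)
  moreover have "rp0 s (zc s m) y = y" by (rule rp0_boundary[OF y s, of i]) (use yi in simp)
  ultimately show ?thesis by simp
qed

lemma rp0_in_hyper:
  assumes y: "y \<in> cube s m" and s: "s > 0" and ne: "y \<noteq> zc s m"
  shows "\<exists>i k. (rp0 s (zc s m) y)$i = s * of_int k"
proof -
  let ?v = "y - zc s m"
  obtain i where i: "\<bar>?v$i\<bar> = infnorm ?v" using infnorm_attained_cart by blast
  have pos: "infnorm ?v > 0" using ne by (simp add: infnorm_pos_lt)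
  have "(rp0 s (zc s m) y)$i = s * (of_int (m i) + 1/2) + (s / (2 * infnorm ?v)) * ?v$i"
    by (simp add: rp0_def zc_def)
  also have "(s / (2 * infnorm ?v)) * ?v$i = s/2 * sgn (?v$i)"
  proof -
    have "?v$i = sgn (?v$i) * infnorm ?v" using i by (metis sgn_mult_abs)
    then have "(s / (2 * infnorm ?v)) * ?v$i = (s / (2 * infnorm ?v)) * (sgn (?v$i) * infnorm ?v)"
      by simp
    also have "\<dots> = s/2 * sgn (?v$i)" using pos by (simp add: field_simps)
    finally show ?thesis .
  qed
  finally have e: "(rp0 s (zc s m) y)$i = s * (of_int (m i) + 1/2) + s/2 * sgn (?v$i)" .
  have "?v$i \<noteq> 0" using pos i by auto
  then show ?thesis
  proof (cases "?v$i > 0")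
    case True
    then show ?thesis using e by (intro exI[of _ i] exI[of _ "m i + 1"]) (simp add: algebra_simps)
  next
    case False
    then have "?v$i < 0" using \<open>?v$i \<noteq> 0\<close> by linarith
    then show ?thesis using e by (intro exI[of _ i] exI[of _ "m i"]) (simp add: algebra_simps)
  qed
qed

lemma rp_dist: fixes y :: "real^'n" assumes s: "s > 0" shows "dist (rp s y) y \<le> sqrt (real CARD('n)) * s"
proof -
  let ?m = "idx s y" let ?z = "zc s ?m" let ?v = "y - ?z"
  have y: "y \<in> cube s ?m" by (rule in_cube_idx[OF s])
  have "infnorm (rp s y - y) \<le> s"
  proof (cases "?v = 0")
    case True then show ?thesis using s by (simp add: rp_def rp0_def infnorm_0)
  next
    case False
    then have pos: "infnorm ?v > 0" by (simp add: infnorm_pos_lt)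
    have "rp s y - y = ((s / (2 * infnorm ?v)) - 1) *\<^sub>R ?v"
      by (simp add: rp_def rp0_def algebra_simps)
    then have "infnorm (rp s y - y) = \<bar>s / (2 * infnorm ?v) - 1\<bar> * infnorm ?v"
      by (simp add: infnorm_mul)
    also have "\<dots> = \<bar>s/2 - infnorm ?v\<bar>"
      using pos by (simp add: abs_mult[symmetric] field_simps)
    also have "\<dots> \<le> s" using cube_infnorm[OF y] pos s by linarith
    finally show ?thesis .
  qed
  then have "sqrt (real CARD('n)) * infnorm (rp s y - y) \<le> sqrt (real CARD('n)) * s"
    by (intro mult_left_mono) auto
  moreover have "norm (rp s y - y) \<le> sqrt (real CARD('n)) * infnorm (rp s y - y)"
    using norm_le_infnorm[of "rp s y - y"] by simp
  ultimately have "norm (rp s y - y) \<le> sqrt (real CARD('n)) * s" by linarith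
  then show ?thesis by (simp add: dist_norm)
qed


lemma negligible_coord_hyperplane: "negligible {v::real^'n. v$i = c}"
proof -
  have "{v::real^'n. v$i = c} = {v. axis i 1 \<bullet> v = c}" by (simp add: inner_axis')
  moreover have "axis i (1::real) \<noteq> 0" by (simp add: axis_eq_0_iff)
  ultimately show ?thesis using negligible_hyperplane by metis
qed

lemma grid_retract:
  fixes T :: "(real^'n) set"
  assumes s: "s > 0" and T: "compact T" and miss: "\<And>y m. y \<in> T \<Longrightarrow> y \<noteq> zc s m"
  shows "continuous_on T (rp s)" "negligible (rp s ` T)"
proof -
  obtain B where B: "\<And>y. y \<in> T \<Longrightarrow> norm y \<le> B"
    using compact_imp_bounded[OF T] by (auto simp: bounded_iff)
  define N where "N = \<lceil>B/s\<rceil>"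
  define M where "M = {m::'n\<Rightarrow>int. \<forall>i. m i \<in> {-N..N}}"
  have "M = PiE UNIV (\<lambda>_. {-N..N})" by (auto simp: M_def PiE_UNIV_domain Pi_def)
  then have finM: "finite M" by (simp add: finite_PiE)
  have idxM: "idx s y \<in> M" if "y \<in> T" for y
  proof -
    have "\<lfloor>y$i/s\<rfloor> \<in> {-N..N}" for i
    proof -
      have "\<bar>y$i\<bar> \<le> B" using component_le_norm_cart[of y i] B[OF that] by linarith
      then have "-B \<le> y$i" "y$i \<le> B" by linarith+
      then have "(-B)/s \<le> y$i/s" "y$i/s \<le> B/s" using s by (simp_all only: divide_right_mono less_imp_le)
      moreover have "B/s \<le> of_int N" "-(of_int N) \<le> -B/s" unfolding N_def by linarith+
      ultimately have "of_int (-N) \<le> y$i/s" "y$i/s \<le> of_int N" by linarith+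
      then show ?thesis by (simp add: le_floor_iff floor_le_iff)
    qed
    then show ?thesis by (simp add: M_def idx_def)
  qed
  have Teq: "T = (\<Union>m\<in>M. cube s m \<inter> T)"
    using idxM in_cube_idx[OF s] by blast
  have "continuous_on (\<Union>m\<in>M. cube s m \<inter> T) (rp s)"
  proof (rule continuous_on_closed_Union[OF finM])
    fix m assume "m \<in> M"
    show "closed (cube s m \<inter> T)" by (intro closed_Int closed_cube compact_imp_closed T)
    have "continuous_on (cube s m \<inter> T) (rp0 s (zc s m))"
      unfolding rp0_def
      by (intro continuous_intros) (use miss in \<open>auto simp: infnorm_eq_0\<close>)
    then show "continuous_on (cube s m \<inter> T) (rp s)"
      by (rule continuous_on_eq) (use rp_eq_rp0[OF _ s] in \<open>auto simp: eq_commute\<close>)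
  qed
  then show "continuous_on T (rp s)" using Teq by simp
  let ?H = "(\<lambda>(i,k). {v::real^'n. v$i = s * of_int k}) ` (UNIV \<times> (UNIV::int set))"
  have "rp s ` T \<subseteq> \<Union>?H"
  proof
    fix v assume "v \<in> rp s ` T"
    then obtain y where y: "y \<in> T" "v = rp s y" by blast
    obtain i k where "(rp0 s (zc s (idx s y)) y)$i = s * of_int k"
      using rp0_in_hyper[OF in_cube_idx[OF s] s miss[OF y(1)]] by blast
    then show "v \<in> \<Union>?H" using y by (auto simp: rp_def)
  qed
  moreover have "negligible (\<Union>?H)"
  proof (rule negligible_countable_Union)
    show "countable ?H" by (intro countable_image countable_SIGMA) (auto intro: countable_finite)
  qed (auto intro: negligible_coord_hyperplane)
  ultimately show "negligible (rp s ` T)" by (rule negligible_subset[rotated])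
qed



lemma quot_lip:
  fixes N :: "'a \<Rightarrow> 'b::real_normed_vector" and D :: "'a \<Rightarrow> real"
  assumes d0: "d0 > 0" "d0 \<le> D u" "d0 \<le> D v" and M: "D v \<le> M" and M': "norm (N v) \<le> M'"
    and a: "norm (N u - N v) \<le> a * t" and b: "\<bar>D u - D v\<bar> \<le> b * t"
  shows "norm ((1 / D u) *\<^sub>R N u - (1 / D v) *\<^sub>R N v) \<le> ((M * a + b * M') / d0^2) * t"
proof -
  have Du: "D u > 0" and Dv: "D v > 0" using d0 by linarith+
  have eq: "(1 / D u) *\<^sub>R N u - (1 / D v) *\<^sub>R N v
        = (1 / (D u * D v)) *\<^sub>R (D v *\<^sub>R (N u - N v) + (D v - D u) *\<^sub>R N v)"
    using Du Dv by (simp add: algebra_simps scaleR_diff_right)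
  have "norm (D v *\<^sub>R (N u - N v) + (D v - D u) *\<^sub>R N v)
        \<le> D v * norm (N u - N v) + \<bar>D v - D u\<bar> * norm (N v)"
    using Dv by (metis (no_types, lifting) abs_of_pos norm_scaleR norm_triangle_ineq order.trans order_refl add_mono)
  also have "\<dots> \<le> M * (a * t) + (b * t) * M'"
  proof (rule add_mono)
    show "D v * norm (N u - N v) \<le> M * (a * t)"
      using a M Dv by (meson less_imp_le mult_mono norm_ge_zero order.trans)
    have "\<bar>D v - D u\<bar> = \<bar>D u - D v\<bar>" by simp
    then show "\<bar>D v - D u\<bar> * norm (N v) \<le> (b * t) * M'"
      using b M' by (metis abs_ge_zero mult_mono norm_ge_zero order.trans)
  qed
  finally have n1: "norm (D v *\<^sub>R (N u - N v) + (D v - D u) *\<^sub>R N v) \<le> (M * a + b * M') * t"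
    by (simp add: algebra_simps)
  have pos: "0 \<le> (M * a + b * M') * t" using n1 norm_ge_zero order.trans by blast
  have "d0^2 \<le> D u * D v" using d0 by (simp add: power2_eq_square mult_mono)
  then have inv: "1 / (D u * D v) \<le> 1 / d0^2" using d0 by (simp add: frac_le)
  have "norm ((1 / D u) *\<^sub>R N u - (1 / D v) *\<^sub>R N v)
       = (1 / (D u * D v)) * norm (D v *\<^sub>R (N u - N v) + (D v - D u) *\<^sub>R N v)"
    using Du Dv by (simp add: eq)
  also have "\<dots> \<le> (1 / d0^2) * ((M * a + b * M') * t)"
    using Du Dv inv n1 pos by (intro mult_mono) auto
  finally show ?thesis by simp
qed



lemma key:
  fixes f F :: "real^'n \<Rightarrow> real^'n" and \<U> :: "(real^'n) set set" and K :: "(real^'n) set"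
  defines "K \<equiv> cbox 0 One"
  assumes e: "0 < e"
   and P: "\<And>x y. x \<in> K \<Longrightarrow> y \<in> F ` K \<Longrightarrow>
              \<exists>U\<in>\<U>. x \<in> U \<and> (\<forall>x'\<in>K. x' \<in> frontier U \<longrightarrow> e \<le> dist (f x') y)"
   and UU: "\<And>U. U \<in> \<U> \<Longrightarrow> bounded U \<and> diameter U < 1/4"
   and contF: "continuous_on K F" and Ff: "\<And>x. x\<in>K \<Longrightarrow> dist (F x) (f x) < e/4"
   and neg: "negligible (F ` K)"
  shows False
proof -
  define r where "r = e/4"
  have r: "r > 0" using e by (simp add: r_def)
  have cK: "compact K" "convex K" unfolding K_def by auto
  have cFK: "compact (F ` K)" using cK contF by (simp add: compact_continuous_image)
  obtain Y where Y: "Y \<subseteq> F ` K" "finite Y" "F ` K \<subseteq> (\<Union>y\<in>Y. ball y r)"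
    using compactE_image[OF cFK, of "F ` K" "\<lambda>y. ball y r"] r by force
  define \<theta> where "\<theta> y v = max 0 (r - dist v y)" for y v :: "real^'n"
  define D where "D v = (\<Sum>y\<in>Y. \<theta> y v)" for v
  have \<theta>0: "0 \<le> \<theta> y v" for y v by (simp add: \<theta>_def)
  have \<theta>r: "\<theta> y v \<le> r" for y v using r by (simp add: \<theta>_def)
  have \<theta>pos: "\<theta> y v > 0 \<Longrightarrow> dist v y < r" for y v by (simp add: \<theta>_def)
  have \<theta>lip: "\<bar>\<theta> y u - \<theta> y v\<bar> \<le> dist u v" for y u v
  proof -
    have "\<bar>dist u y - dist v y\<bar> \<le> dist u v" using abs_dist_diff_le[of u y v] by (simp add: dist_commute)
    then show ?thesis by (simp add: \<theta>_def)
  qed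
  have contT: "continuous_on S (\<theta> y)" for S y
    unfolding \<theta>_def by (intro continuous_intros)
  have Dpos: "D v > 0" if "v \<in> F ` K" for v
  proof -
    have "v \<in> (\<Union>y\<in>Y. ball y r)" using Y(3) that by blast
    then obtain y where y: "y \<in> Y" "dist v y < r" by (auto simp: dist_commute)
    have "0 < \<theta> y v" using y by (simp add: \<theta>_def)
    also have "\<theta> y v \<le> D v" unfolding D_def using Y(2) y(1) \<theta>0 by (intro member_le_sum) auto
    finally show ?thesis .
  qed
  define Ob where "Ob y = {x\<in>K. dist (F x) y < 2*r}" for y
  define comp where "comp y x = connected_component_set (Ob y) x" for y x
  define c where "c y x = (SOME p. p \<in> comp y x)" for y x
  have c_in: "c y x \<in> comp y x" if "x \<in> Ob y" for y x
    unfolding c_def by (rule someI[of _ x]) (use that in \<open>simp add: comp_def\<close>)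
  have c_const: "c y a = c y x" if "a \<in> comp y x" for y a x
  proof -
    have "comp y a = comp y x" using that unfolding comp_def by (rule connected_component_eq)
    then show ?thesis unfolding c_def by simp
  qed
  have c_close: "dist (c y x) x < 1/4" if x: "x \<in> Ob y" and y: "y \<in> Y" for y x
  proof -
    have xK: "x \<in> K" using x by (simp add: Ob_def)
    have yF: "y \<in> F ` K" using Y(1) y by blast
    from P[OF xK yF] obtain U where U: "U \<in> \<U>" "x \<in> U"
       and Ub0: "\<forall>x'\<in>K. x' \<in> frontier U \<longrightarrow> e \<le> dist (f x') y" by blast
    have Ub: "\<And>x'. x' \<in> K \<Longrightarrow> x' \<in> frontier U \<Longrightarrow> e \<le> dist (f x') y" using Ub0 by blast
    have xc: "x \<in> comp y x" using x by (simp add: comp_def)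
    have cc: "connected (comp y x)" by (simp add: comp_def)
    have sub: "comp y x \<subseteq> U"
    proof (rule ccontr)
      assume "\<not> comp y x \<subseteq> U"
      then have "comp y x - U \<noteq> {}" by blast
      moreover have "comp y x \<inter> U \<noteq> {}" using U(2) xc by blast
      ultimately have "comp y x \<inter> frontier U \<noteq> {}"
        using connected_Int_frontier[OF cc] by blast
      then obtain x' where x': "x' \<in> comp y x" "x' \<in> frontier U" by blast
      have x'O: "x' \<in> Ob y" using x'(1) connected_component_subset unfolding comp_def by blast
      then have x'K: "x' \<in> K" and d1: "dist (F x') y < 2*r" by (auto simp: Ob_def)
      have "dist (f x') y \<le> dist (F x') (f x') + dist (F x') y" using dist_triangle[of "f x'" y "F x'"] by (simp add: dist_commute)
      also have "\<dots> < e/4 + 2*r" using Ff[OF x'K] d1 by linarith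
      finally have "dist (f x') y < e" using e by (simp add: r_def)
      then show False using Ub[OF x'K x'(2)] by linarith
    qed
    have "c y x \<in> U" using c_in[OF x] sub by blast
    then have "dist (c y x) x \<le> diameter U" using UU[OF U(1)] U(2) diameter_bounded_bound by blast
    then show ?thesis using UU[OF U(1)] by linarith
  qed
  have Oopen: "openin (top_of_set K) (Ob y)" for y
  proof -
    have "Ob y = K \<inter> F -` ball y (2*r)" by (auto simp: Ob_def dist_commute)
    then show ?thesis using continuous_openin_preimage_gen[OF contF, of "ball y (2*r)"] by simp
  qed
  have lcO: "locally connected (Ob y)" for y
    using locally_open_subset[OF convex_imp_locally_connected[OF cK(2)] Oopen] .
  have contc: "continuous_on (Ob y) (c y)" for y
  proof (rule continuous_on_components[OF lcO])
    fix C assume "C \<in> components (Ob y)"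
    then obtain x where x: "x \<in> Ob y" "C = comp y x" unfolding components_iff comp_def by blast
    have "continuous_on C (\<lambda>_. c y x)" by simp
    then show "continuous_on C (c y)"
    proof (rule continuous_on_eq)
      fix a assume "a \<in> C"
      then show "c y x = c y a" using c_const[of a y x] x(2) by simp
    qed
  qed
  define A where "A y = {x\<in>K. dist (F x) y \<le> r}" for y
  have A_eq: "A y = K \<inter> F -` cball y r" for y by (auto simp: A_def dist_commute)
  have clA: "closed (A y)" for y
    unfolding A_eq by (rule continuous_closed_preimage[OF contF]) (use cK in \<open>auto intro: compact_imp_closed\<close>)
  have AO: "A y \<subseteq> Ob y" for y using r by (auto simp: A_def Ob_def)
  have AK: "A y \<subseteq> K" for y by (auto simp: A_def)
  have contFT: "continuous_on S (\<lambda>x. \<theta> y (F x))" if "S \<subseteq> K" for S y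
    using continuous_on_compose2[OF contT continuous_on_subset[OF contF that], of UNIV y] by simp
  have contTerm: "continuous_on K (\<lambda>x. \<theta> y (F x) *\<^sub>R c y x)" for y
  proof -
    define B where "B = {x\<in>K. r \<le> dist (F x) y}"
    have B_eq: "B = K \<inter> F -` (- ball y r)" by (auto simp: B_def dist_commute)
    have clB: "closed B"
      unfolding B_eq by (rule continuous_closed_preimage[OF contF]) (use cK in \<open>auto intro: compact_imp_closed\<close>)
    have KAB: "K = A y \<union> B" by (auto simp: A_def B_def)
    have c1: "continuous_on (A y) (\<lambda>x. \<theta> y (F x) *\<^sub>R c y x)"
      by (intro continuous_on_scaleR contFT AK continuous_on_subset[OF contc AO])
    have c2: "continuous_on B (\<lambda>x. \<theta> y (F x) *\<^sub>R c y x)"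
    proof (rule continuous_on_eq[OF continuous_on_const[of B 0]])
      fix x assume "x \<in> B" then show "0 = \<theta> y (F x) *\<^sub>R c y x" by (simp add: B_def \<theta>_def)
    qed
    show ?thesis using continuous_on_closed_Un[OF clA clB c1 c2] KAB by simp
  qed
  define h where "h x = (1 / D (F x)) *\<^sub>R (\<Sum>y\<in>Y. \<theta> y (F x) *\<^sub>R c y x)" for x
  have DF: "D (F x) > 0" if "x \<in> K" for x using Dpos that by blast
  have contD: "continuous_on K (\<lambda>x. D (F x))"
    unfolding D_def by (intro continuous_on_sum contFT) simp
  have cs: "continuous_on K (\<lambda>x. \<Sum>y\<in>Y. \<theta> y (F x) *\<^sub>R c y x)"
    by (rule continuous_on_sum) (rule contTerm)
  have cinv: "continuous_on K (\<lambda>x. 1 / D (F x))"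
    by (rule continuous_on_divide[OF continuous_on_const contD]) (use DF in force)
  have conth: "continuous_on K h"
    unfolding h_def by (rule continuous_on_scaleR[OF cinv cs])
  have hclose: "norm (h x - x) \<le> 1/4" if x: "x \<in> K" for x
  proof -
    have D0: "D (F x) > 0" using DF x by blast
    have "h x - x = (1 / D (F x)) *\<^sub>R ((\<Sum>y\<in>Y. \<theta> y (F x) *\<^sub>R c y x) - D (F x) *\<^sub>R x)"
      using D0 by (simp add: h_def algebra_simps)
    also have "(\<Sum>y\<in>Y. \<theta> y (F x) *\<^sub>R c y x) - D (F x) *\<^sub>R x = (\<Sum>y\<in>Y. \<theta> y (F x) *\<^sub>R (c y x - x))"
      by (simp add: D_def scaleR_sum_left sum_subtractf scaleR_diff_right)
    finally have eq: "h x - x = (1 / D (F x)) *\<^sub>R (\<Sum>y\<in>Y. \<theta> y (F x) *\<^sub>R (c y x - x))" .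
    have "norm (\<Sum>y\<in>Y. \<theta> y (F x) *\<^sub>R (c y x - x)) \<le> (\<Sum>y\<in>Y. norm (\<theta> y (F x) *\<^sub>R (c y x - x)))"
      by (rule norm_sum)
    also have "\<dots> \<le> (\<Sum>y\<in>Y. \<theta> y (F x) * (1/4))"
    proof (rule sum_mono)
      fix y assume y: "y \<in> Y"
      show "norm (\<theta> y (F x) *\<^sub>R (c y x - x)) \<le> \<theta> y (F x) * (1/4)"
      proof (cases "\<theta> y (F x) > 0")
        case True
        then have "dist (F x) y < r" by (rule \<theta>pos)
        then have "x \<in> Ob y" using x r by (simp add: Ob_def)
        then have "norm (c y x - x) < 1/4" using c_close y by (simp add: dist_norm)
        then have "\<theta> y (F x) * norm (c y x - x) \<le> \<theta> y (F x) * (1/4)"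
          using \<theta>0[of y "F x"] by (intro mult_left_mono) auto
        then show ?thesis using \<theta>0[of y "F x"] by simp
      next
        case False
        then have "\<theta> y (F x) = 0" using \<theta>0[of y "F x"] by linarith
        then show ?thesis by simp
      qed
    qed
    also have "\<dots> = D (F x) / 4" by (simp add: D_def sum_distrib_right)
    finally have n: "norm (\<Sum>y\<in>Y. \<theta> y (F x) *\<^sub>R (c y x - x)) \<le> D (F x) / 4" .
    have "norm (h x - x) = (1 / D (F x)) * norm (\<Sum>y\<in>Y. \<theta> y (F x) *\<^sub>R (c y x - x))"
      using D0 by (simp add: eq)
    also have "\<dots> \<le> (1 / D (F x)) * (D (F x) / 4)" using n D0 by (intro mult_left_mono) auto
    also have "\<dots> = 1/4" using D0 by simp
    finally show ?thesis .
  qed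
  have cube_sub: "cbox ((1/4) *\<^sub>R One) ((3/4) *\<^sub>R One) \<subseteq> h ` K"
    using brouwer_step[OF conth[unfolded K_def] hclose[unfolded K_def]] unfolding K_def .
  have finA: "finite (c y ` A y)" for y
  proof -
    have cA: "compact (A y)"
    proof -
      have "compact (K \<inter> A y)" by (rule compact_Int_closed[OF cK(1) clA])
      moreover have "K \<inter> A y = A y" using AK by blast
      ultimately show ?thesis by simp
    qed
    have opc: "\<exists>G. open G \<and> comp y x = Ob y \<inter> G" if "x \<in> Ob y" for x
    proof -
      have "comp y x \<in> components (Ob y)" using that by (simp add: comp_def componentsI)
      then have "openin (top_of_set (Ob y)) (comp y x)"
        by (rule openin_components_locally_connected[OF lcO])
      then show ?thesis by (simp add: openin_open)
    qed
    define G where "G x = (SOME G. open G \<and> comp y x = Ob y \<inter> G)" for x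
    have G: "open (G x) \<and> comp y x = Ob y \<inter> G x" if "x \<in> Ob y" for x
      unfolding G_def using someI_ex[OF opc[OF that]] .
    have "A y \<subseteq> (\<Union>x\<in>A y. G x)"
    proof
      fix x assume x: "x \<in> A y"
      then have xO: "x \<in> Ob y" using AO by blast
      then have "x \<in> comp y x" by (simp add: comp_def)
      then have "x \<in> G x" using G[OF xO] by blast
      then show "x \<in> (\<Union>x\<in>A y. G x)" using x by blast
    qed
    then obtain X0 where X0: "X0 \<subseteq> A y" "finite X0" "A y \<subseteq> (\<Union>x\<in>X0. G x)"
      using compactE_image[OF cA, of "A y" G] G AO by blast
    have "c y ` A y \<subseteq> c y ` X0"
    proof
      fix p assume "p \<in> c y ` A y"
      then obtain a where a: "a \<in> A y" "p = c y a" by blast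
      then obtain x where x: "x \<in> X0" "a \<in> G x" using X0(3) by blast
      have xO: "x \<in> Ob y" using x(1) X0(1) AO by blast
      have "a \<in> comp y x" using G[OF xO] x(2) a(1) AO by blast
      then have "c y a = c y x" by (rule c_const)
      then show "p \<in> c y ` X0" using a x by blast
    qed
    then show ?thesis using X0(2) finite_subset by blast
  qed
  define \<Phi> where "\<Phi> = PiE Y (\<lambda>y. insert 0 (c y ` A y))"
  have fin\<Phi>: "finite \<Phi>" unfolding \<Phi>_def using Y(2) finA by (intro finite_PiE) auto
  define L where "L \<phi> v = (1 / D v) *\<^sub>R (\<Sum>y\<in>Y. \<theta> y v *\<^sub>R \<phi> y)" for \<phi> :: "real^'n \<Rightarrow> real^'n" and v
  define ch where "ch x = restrict (\<lambda>y. if \<theta> y (F x) > 0 then c y x else 0) Y" for x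
  have ch\<Phi>: "ch x \<in> \<Phi>" if x: "x \<in> K" for x
  proof -
    have "(if \<theta> y (F x) > 0 then c y x else 0) \<in> insert 0 (c y ` A y)" for y
    proof (cases "\<theta> y (F x) > 0")
      case True
      then have "x \<in> A y" using \<theta>pos[OF True] x by (simp add: A_def)
      then show ?thesis using True by simp
    qed simp
    then show ?thesis by (simp add: \<Phi>_def ch_def)
  qed
  have hL: "h x = L (ch x) (F x)" for x
  proof -
    have "(\<Sum>y\<in>Y. \<theta> y (F x) *\<^sub>R c y x) = (\<Sum>y\<in>Y. \<theta> y (F x) *\<^sub>R ch x y)"
    proof (rule sum.cong)
      fix y assume "y \<in> Y"
      then show "\<theta> y (F x) *\<^sub>R c y x = \<theta> y (F x) *\<^sub>R ch x y"
        using \<theta>0[of y "F x"] by (auto simp: ch_def)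
    qed simp
    then show ?thesis by (simp add: h_def L_def)
  qed
  have hsub: "h ` K \<subseteq> \<Union>((\<lambda>\<phi>. L \<phi> ` (F ` K)) ` \<Phi>)"
    using ch\<Phi> hL by blast
  obtain v0 where v0: "v0 \<in> F ` K" "\<And>v. v \<in> F ` K \<Longrightarrow> D v0 \<le> D v"
  proof -
    have "continuous_on (F ` K) D" unfolding D_def by (intro continuous_on_sum contT)
    moreover have "F ` K \<noteq> {}" unfolding K_def by (simp add: box_ne_empty)
    ultimately show ?thesis using continuous_attains_inf[OF cFK] that by blast
  qed
  define d0 where "d0 = D v0"
  have d0: "d0 > 0" "\<And>v. v \<in> F ` K \<Longrightarrow> d0 \<le> D v" using Dpos[OF v0(1)] v0(2) by (auto simp: d0_def)
  have negL: "negligible (L \<phi> ` (F ` K))" for \<phi>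
  proof (rule negligible_locally_Lipschitz_image[OF order_refl neg])
    fix v assume v: "v \<in> F ` K"
    define a where "a = (\<Sum>y\<in>Y. norm (\<phi> y))"
    define M where "M = real (card Y) * r"
    define M' where "M' = r * a"
    define b where "b = real (card Y)"
    define N where "N w = (\<Sum>y\<in>Y. \<theta> y w *\<^sub>R \<phi> y)" for w
    have Lq: "L \<phi> w = (1 / D w) *\<^sub>R N w" for w by (simp add: L_def N_def)
    have DM: "D v \<le> M" unfolding D_def M_def using \<theta>r
      by (metis (no_types, lifting) sum_bounded_above of_nat_eq_of_nat_power_cancel_iff)
    have NM: "norm (N v) \<le> M'"
    proof -
      have "norm (N v) \<le> (\<Sum>y\<in>Y. norm (\<theta> y v *\<^sub>R \<phi> y))" unfolding N_def by (rule norm_sum)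
      also have "\<dots> \<le> (\<Sum>y\<in>Y. r * norm (\<phi> y))"
        using \<theta>0 \<theta>r by (intro sum_mono) (simp add: mult_right_mono)
      finally show ?thesis by (simp add: M'_def a_def sum_distrib_left)
    qed
    have Nlip: "norm (N u - N v) \<le> a * norm (u - v)" for u
    proof -
      have eqN: "N u - N v = (\<Sum>y\<in>Y. (\<theta> y u - \<theta> y v) *\<^sub>R \<phi> y)"
        by (simp add: N_def sum_subtractf scaleR_diff_left)
      have "norm (N u - N v) \<le> (\<Sum>y\<in>Y. norm ((\<theta> y u - \<theta> y v) *\<^sub>R \<phi> y))"
        unfolding eqN by (rule norm_sum)
      also have "\<dots> \<le> (\<Sum>y\<in>Y. norm (u - v) * norm (\<phi> y))"
      proof (rule sum_mono)
        fix y
        have "\<bar>\<theta> y u - \<theta> y v\<bar> \<le> norm (u - v)" using \<theta>lip[of y u v] by (simp add: dist_norm)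
        then show "norm ((\<theta> y u - \<theta> y v) *\<^sub>R \<phi> y) \<le> norm (u - v) * norm (\<phi> y)"
          by (simp add: mult_right_mono)
      qed
      finally show ?thesis by (simp add: a_def sum_distrib_left mult.commute)
    qed
    have Dlip: "\<bar>D u - D v\<bar> \<le> b * norm (u - v)" for u
    proof -
      have "\<bar>D u - D v\<bar> = \<bar>\<Sum>y\<in>Y. \<theta> y u - \<theta> y v\<bar>" by (simp add: D_def sum_subtractf)
      also have "\<dots> \<le> (\<Sum>y\<in>Y. \<bar>\<theta> y u - \<theta> y v\<bar>)" by (rule sum_abs)
      also have "\<dots> \<le> (\<Sum>y\<in>Y. norm (u - v))"
        by (rule sum_mono) (use \<theta>lip in \<open>simp add: dist_norm\<close>)
      finally show ?thesis by (simp add: b_def)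
    qed
    show "\<exists>T B. open T \<and> v \<in> T \<and> (\<forall>u\<in>F ` K \<inter> T. norm (L \<phi> u - L \<phi> v) \<le> B * norm (u - v))"
    proof (intro exI conjI ballI)
      fix u assume "u \<in> F ` K \<inter> UNIV"
      then have u: "u \<in> F ` K" by simp
      show "norm (L \<phi> u - L \<phi> v) \<le> ((M * a + b * M') / d0^2) * norm (u - v)"
        unfolding Lq by (rule quot_lip[OF d0(1) d0(2)[OF u] d0(2)[OF v] DM NM Nlip Dlip])
    qed auto
  qed
  have "negligible (h ` K)"
    by (rule negligible_subset[OF _ hsub]) (use fin\<Phi> negL in auto)
  then have "negligible (cbox ((1/4) *\<^sub>R One) ((3/4) *\<^sub>R (One::real^'n)))"
    using cube_sub negligible_subset by blast
  then show False using nonneg_cube by blast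
qed



lemma zc_sep: fixes m m' :: "'n::finite \<Rightarrow> int"
  assumes "m \<noteq> m'" "s > 0" shows "s \<le> dist (zc s m) (zc s m')"
proof -
  obtain i where i: "m i \<noteq> m' i" using assms(1) by auto
  then have "1 \<le> \<bar>m i - m' i\<bar>" by linarith
  then have "1 \<le> real_of_int \<bar>m i - m' i\<bar>" by linarith
  then have "1 \<le> \<bar>real_of_int (m i) - of_int (m' i)\<bar>" by simp
  then have "s \<le> s * \<bar>real_of_int (m i) - of_int (m' i)\<bar>" using assms(2) by simp
  also have "\<dots> = \<bar>(zc s m - zc s m')$i\<bar>"
  proof -
    have "(zc s m - zc s m')$i = s * (of_int (m i) - of_int (m' i))" by (simp add: zc_def algebra_simps)
    then show ?thesis using assms(2) by (simp add: abs_mult)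
  qed
  also have "\<dots> \<le> norm (zc s m - zc s m')" by (rule component_le_norm_cart)
  finally show ?thesis by (simp add: dist_norm)
qed

theorem mainTheorem6:
  "\<exists>\<epsilon>>0. \<forall>(\<U> :: (real ^ 'n) set set) (f :: real ^ 'n \<Rightarrow> real ^ 'n).
     (\<forall>U\<in>\<U>. open U \<and> bounded U \<and> diameter U < \<epsilon>) \<and>
     cbox 0 One \<subseteq> \<Union>\<U> \<and>
     continuous_on (cbox 0 One) f \<and>
     (\<forall>x\<in>cbox 0 One. \<exists>\<I>\<subseteq>\<U>. (\<forall>U\<in>\<I>. x \<in> U) \<and>
         (\<Inter>U\<in>\<I>. f ` (frontier U \<inter> cbox 0 One)) = {})
     \<longrightarrow> (\<exists>z. stable_value (cbox 0 One) f z)"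
proof (intro exI[of _ "1/4"] conjI allI impI)
  show "(0::real) < 1/4" by simp
  fix \<U> :: "(real ^ 'n) set set" and f :: "real ^ 'n \<Rightarrow> real ^ 'n"
  define K :: "(real^'n) set" where "K = cbox 0 One"
  assume hyp: "(\<forall>U\<in>\<U>. open U \<and> bounded U \<and> diameter U < 1/4) \<and>
     cbox 0 One \<subseteq> \<Union>\<U> \<and>
     continuous_on (cbox 0 One) f \<and>
     (\<forall>x\<in>cbox 0 One. \<exists>\<I>\<subseteq>\<U>. (\<forall>U\<in>\<I>. x \<in> U) \<and>
         (\<Inter>U\<in>\<I>. f ` (frontier U \<inter> cbox 0 One)) = {})"
  then have UU0: "\<forall>U\<in>\<U>. open U \<and> bounded U \<and> diameter U < 1/4"
    and contf: "continuous_on K f"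
    and I0: "\<forall>x\<in>K. \<exists>\<I>\<subseteq>\<U>. (\<forall>U\<in>\<I>. x \<in> U) \<and> (\<Inter>U\<in>\<I>. f ` (frontier U \<inter> K)) = {}"
    unfolding K_def
    using conjunct1[OF hyp] conjunct1[OF conjunct2[OF conjunct2[OF hyp]]] conjunct2[OF conjunct2[OF conjunct2[OF hyp]]]
    by auto
  have UU: "\<And>U. U \<in> \<U> \<Longrightarrow> open U \<and> bounded U \<and> diameter U < 1/4" using UU0 by (rule bspec)
  have I: "\<And>x. x \<in> K \<Longrightarrow> \<exists>\<I>\<subseteq>\<U>. (\<forall>U\<in>\<I>. x \<in> U) \<and> (\<Inter>U\<in>\<I>. f ` (frontier U \<inter> K)) = {}"
    using I0 by (rule bspec)
  show "\<exists>z. stable_value (cbox 0 One) f z"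
  proof (rule ccontr)
    assume nst: "\<nexists>z. stable_value (cbox 0 One) f z"
    have avoid: "\<exists>g. continuous_on K g \<and> (\<forall>x\<in>K. dist (f x) (g x) < e) \<and> (\<forall>x\<in>K. g x \<noteq> z)"
      if e: "e > 0" for z e
    proof -
      from nst have "\<not> stable_value K f z" by (simp add: K_def)
      then have ns: "\<not> (\<exists>e>0. \<forall>g. continuous_on K g \<and> bdd_above ((\<lambda>x. dist (f x) (g x)) ` K)
                  \<and> (SUP x\<in>K. dist (f x) (g x)) < e \<longrightarrow> z \<in> g ` K)"
        unfolding stable_value_def .
      have "\<not> (\<forall>g. continuous_on K g \<and> bdd_above ((\<lambda>x. dist (f x) (g x)) ` K)
                  \<and> (SUP x\<in>K. dist (f x) (g x)) < e \<longrightarrow> z \<in> g ` K)"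
        using ns e by (intro notI) (erule notE, rule exI[of _ e], simp)
      then obtain g where g: "continuous_on K g" "bdd_above ((\<lambda>x. dist (f x) (g x)) ` K)"
          "(SUP x\<in>K. dist (f x) (g x)) < e" "z \<notin> g ` K"
        by (simp only: not_all not_imp) (elim exE conjE, blast)
      have "dist (f x) (g x) < e" if "x \<in> K" for x
        using cSUP_upper[OF that g(2)] g(3) by linarith
      then show ?thesis using g(1,4) by blast
    qed
    have cK: "compact K" unfolding K_def by simp
    have Kne: "K \<noteq> {}" unfolding K_def by (simp add: box_ne_empty)
    obtain R where R: "R > 0" "\<And>x. x \<in> K \<Longrightarrow> norm (f x) \<le> R"
      using compact_imp_bounded[OF compact_continuous_image[OF contf cK]]
      by (auto simp: bounded_pos)
    define A where "A U = f ` (frontier U \<inter> K)" for U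
    have clA: "closed (A U)" for U
    proof -
      have "compact (frontier U \<inter> K)" by (rule closed_Int_compact[OF frontier_closed cK])
      then have "compact (A U)" unfolding A_def
        by (rule compact_continuous_image[OF continuous_on_subset[OF contf], rotated]) auto
      then show ?thesis by (rule compact_imp_closed)
    qed
    define S where "S = K \<times> cball (0::real^'n) (R+1)"
    have cS: "compact S" unfolding S_def using cK by (simp add: compact_Times)
    have cover: "S \<subseteq> \<Union>((\<lambda>U. U \<times> (- A U)) ` \<U>)"
    proof
      fix p assume "p \<in> S"
      then obtain x y where p: "p = (x, y)" "x \<in> K" by (auto simp: S_def)
      obtain \<I> where \<I>: "\<I> \<subseteq> \<U>" "\<forall>U\<in>\<I>. x \<in> U" "(\<Inter>U\<in>\<I>. A U) = {}"
        using I[OF p(2)] unfolding A_def by blast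
      have "y \<notin> (\<Inter>U\<in>\<I>. A U)" using \<I>(3) by blast
      then obtain U where "U \<in> \<I>" "y \<notin> A U" by blast
      then show "p \<in> \<Union>((\<lambda>U. U \<times> (- A U)) ` \<U>)" using \<I> p by blast
    qed
    have opG: "open G" if "G \<in> (\<lambda>U. U \<times> (- A U)) ` \<U>" for G
      using that UU clA by (auto intro: open_Times)
    obtain e0 where e0: "e0 > 0" "\<And>p. p \<in> S \<Longrightarrow> \<exists>G\<in>(\<lambda>U. U \<times> (- A U)) ` \<U>. ball p e0 \<subseteq> G"
      using Heine_Borel_lemma[OF cS cover opG] by blast
    define e where "e = min e0 1"
    have e: "e > 0" "e \<le> 1" "e \<le> e0" using e0 by (auto simp: e_def)
    have P: "\<exists>U\<in>\<U>. x \<in> U \<and> (\<forall>x'\<in>K. x' \<in> frontier U \<longrightarrow> e \<le> dist (f x') y)"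
      if x: "x \<in> K" and y: "y \<in> cball 0 (R+1)" for x y
    proof -
      have "(x, y) \<in> S" using x y by (simp add: S_def)
      from e0(2)[OF this] obtain U where U: "U \<in> \<U>" "ball (x, y) e0 \<subseteq> U \<times> (- A U)" by blast
      have "(x, y) \<in> ball (x, y) e0" using e0 by simp
      then have xU: "x \<in> U" using U(2) by blast
      have "e \<le> dist (f x') y" if x': "x' \<in> K" "x' \<in> frontier U" for x'
      proof (rule ccontr)
        assume "\<not> e \<le> dist (f x') y"
        then have "dist (f x') y < e0" using e by linarith
        then have "(x, f x') \<in> ball (x, y) e0" by (simp add: dist_Pair_Pair dist_commute)
        then have "f x' \<notin> A U" using U(2) by blast
        moreover have "f x' \<in> A U" using x' by (simp add: A_def)
        ultimately show False by blast
      qed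
      then show ?thesis using U(1) xU by blast
    qed
    define c where "c = sqrt (real CARD('n))"
    have c0: "c \<ge> 0" by (simp add: c_def)
    define s where "s = e / (16 * (c + 1))"
    have s: "s > 0" using e c0 by (simp add: s_def)
    have cs: "c * s \<le> e/16"
    proof -
      have "c * s = (e/16) * (c / (c + 1))" using c0 by (simp add: s_def field_simps)
      also have "\<dots> \<le> (e/16) * 1" using c0 e by (intro mult_left_mono) auto
      finally show ?thesis by simp
    qed
    define \<eta> where "\<eta> = min (s/8) (e/16)"
    have \<eta>: "\<eta> > 0" "\<eta> \<le> s/8" "\<eta> \<le> e/16" using s e by (auto simp: \<eta>_def)
    define N where "N = \<lceil>(R+1)/s\<rceil>"
    have sN: "R + 1 \<le> s * of_int N"
    proof -
      have "(R+1)/s \<le> of_int N" unfolding N_def by linarith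
      then show ?thesis using s by (simp add: field_simps)
    qed
    define M where "M = {m::'n\<Rightarrow>int. \<forall>i. m i \<in> {-N..N}}"
    have "M = PiE UNIV (\<lambda>_. {-N..N})" by (auto simp: M_def PiE_UNIV_domain Pi_def)
    then have finM: "finite M" by (simp add: finite_PiE)
    define Z where "Z = zc s ` M"
    have finZ: "finite Z" using finM by (simp add: Z_def)
    have sepZ: "s \<le> dist z z'" if zz: "z \<in> Z" "z' \<in> Z" "z \<noteq> z'" for z z'
    proof -
      obtain m m' where mm: "z = zc s m" "z' = zc s m'" using zz(1,2) by (auto simp: Z_def)
      then have "m \<noteq> m'" using zz(3) by auto
      then show ?thesis using zc_sep[OF _ s] mm by simp
    qed
    obtain F0 where F0: "continuous_on K F0" "\<And>x. x\<in>K \<Longrightarrow> dist (F0 x) (f x) < \<eta>"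
        "\<And>x z. x\<in>K \<Longrightarrow> z\<in>Z \<Longrightarrow> F0 x \<noteq> z"
      apply (rule glue[of Z s \<eta> K f])
            apply (rule finZ)
           apply (rule sepZ; assumption)
          apply (rule \<eta>(1))
         apply (rule \<eta>(2))
        apply (rule contf)
       apply (rule avoid[OF \<eta>(1)])
      apply blast
      done
    have F0b: "norm (F0 x) \<le> R + 1" if x: "x \<in> K" for x
    proof -
      have "norm (F0 x) \<le> norm (f x) + dist (F0 x) (f x)"
        by (metis dist_norm norm_triangle_sub add.commute)
      then show ?thesis using R(2)[OF x] F0(2)[OF x] \<eta>(3) e(2) by linarith
    qed
    have miss: "y \<noteq> zc s m" if yin: "y \<in> F0 ` K" for y m
    proof -
      obtain x where x: "x \<in> K" "y = F0 x" using yin by blast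
      show ?thesis
      proof (cases "m \<in> M")
        case True
        then show ?thesis using F0(3)[OF x(1)] x(2) by (auto simp: Z_def)
      next
        case False
        then obtain i where i: "m i \<notin> {-N..N}" by (auto simp: M_def)
        have yi: "\<bar>y$i\<bar> \<le> R + 1" using component_le_norm_cart[of y i] F0b[OF x(1)] unfolding x(2) by linarith
        have zi: "(zc s m)$i = s * (of_int (m i) + 1/2)" by (simp add: zc_def)
        show ?thesis
        proof (cases "m i > N")
          case True
          then have "of_int N + 1 \<le> real_of_int (m i)" by linarith
          then have "s * (of_int N + 1) \<le> s * of_int (m i)" using s by (intro mult_left_mono) auto
          then have "R + 1 < (zc s m)$i" using zi sN s by (simp add: algebra_simps)
          then show ?thesis using yi by auto
        next
          case False
          then have "m i < -N" using i by auto
          then have "real_of_int (m i) \<le> - of_int N - 1" by linarith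
          then have "s * of_int (m i) \<le> s * (- of_int N - 1)" using s by (intro mult_left_mono) auto
          then have "(zc s m)$i < - (R + 1)" using zi sN s by (simp add: algebra_simps)
          then show ?thesis using yi by auto
        qed
      qed
    qed
    have cT: "compact (F0 ` K)" by (rule compact_continuous_image[OF F0(1) cK])
    note gr = grid_retract[OF s cT miss]
    define F' where "F' = rp s \<circ> F0"
    have contF': "continuous_on K F'" unfolding F'_def by (rule continuous_on_compose[OF F0(1) gr(1)])
    have negF': "negligible (F' ` K)" unfolding F'_def image_comp[symmetric] by (rule gr(2))
    have F'f: "dist (F' x) (f x) < e/4" if x: "x \<in> K" for x
    proof -
      have "dist (F' x) (f x) \<le> dist (rp s (F0 x)) (F0 x) + dist (F0 x) (f x)"
        unfolding F'_def o_def by (rule dist_triangle)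
      moreover have "dist (rp s (F0 x)) (F0 x) \<le> c * s" unfolding c_def by (rule rp_dist[OF s])
      ultimately show ?thesis using F0(2)[OF x] \<eta>(3) cs e by linarith
    qed
    have F'b: "y \<in> cball 0 (R+1)" if yin: "y \<in> F' ` K" for y
    proof -
      obtain x where x: "x \<in> K" "y = F' x" using yin by blast
      have "norm y \<le> norm (f x) + dist (F' x) (f x)" using x(2)
        by (metis dist_norm norm_triangle_sub add.commute)
      then show ?thesis using R(2)[OF x(1)] F'f[OF x(1)] e(2) by simp
    qed
    show False
    proof (rule key[where e=e and F=F' and f=f and \<U>=\<U>])
      show "0 < e" by (fact e(1))
      show "\<And>x y. x \<in> cbox 0 One \<Longrightarrow> y \<in> F' ` cbox 0 One \<Longrightarrow>
              \<exists>U\<in>\<U>. x \<in> U \<and> (\<forall>x'\<in>cbox 0 One. x' \<in> frontier U \<longrightarrow> e \<le> dist (f x') y)"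
        using P F'b unfolding K_def by blast
      show "\<And>U. U \<in> \<U> \<Longrightarrow> bounded U \<and> diameter U < 1/4" using UU by blast
      show "continuous_on (cbox 0 One) F'" using contF' by (simp add: K_def)
      show "\<And>x. x \<in> cbox 0 One \<Longrightarrow> dist (F' x) (f x) < e/4" using F'f by (simp add: K_def)
      show "negligible (F' ` cbox 0 One)" using negF' by (simp add: K_def)
    qed

  qed
qed


end
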